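(* For every fixed $(X,Y,Z)$, the partial gradient $X_0\mapsto\nabla_{X_0}\mathcal L_\eta(X,X_0;Y,Z)$ is $\frac3\eta$-Lipschitz continuous with respect to the Frobenius norm. Further, if $\{(X^k,X_0^k;Y^k,Z^k)\}_{k\ge0}$ is generated by ADAPD (defined in the context), then for all $k\ge0$, $$\mathcal L_\eta(X^{k+1},X_0^{k+1};Y^k,Z^k)-\mathcal L_\eta(X^{k+1},X_0^k;Y^k,Z^k)\le-\frac1{2\eta}\|X_0^{k+1}-X_0^k\|_F^2.$$
   Context: Notation: $\langle A,B\rangle=\sum_{i,j}a_{ij}b_{ij}$, $\|\cdot\|_F$ Frobenius norm, $e\in\mathbb R^N$ all-ones vector. Mixing matrix $W\in\mathbb R^{N\times N}$ of an undirected graph $\mathcal G=(\{1,\dots,N\},\mathcal E)$ with (i) $w_{ij}>0$ if $(i,j)\in\mathcal E$, $w_{ij}=0$ otherwise; (ii) $W=W^\top$; (iii) $\mathrm{null}(I-W)=\mathrm{span}\{e\}$; (iv) $-1<\lambda_N(W)\le\dots\le\lambda_2(W)<\lambda_1(W)=1$. $\sqrt{I-W}$ is the PSD square root of $I-W$. $f_i:\mathbb R^p\to\mathbb R$ differentiable; $F(X)=\frac1N\sum_if_i(x_i)$ for $X$ with rows $x_i^\top$, gradient $\nabla F(X)$ with rows $\frac1N\nabla f_i(x_i)^\top$. Augmented Lagrangian, $\eta>0$: $\mathcal L_\eta(X,X_0;Y,Z)=F(X)+\langle Y,X-X_0\rangle+\frac1{2\eta}\|X-X_0\|_F^2+\langle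 Z,\sqrt{I-W}X_0\rangle+\frac1{2\eta}\|\sqrt{I-W}X_0\|_F^2$. ADAPD: fix $\eta>0$ and non-increasing nonnegative $(\epsilon_k)_{k\ge1}$; arbitrary $X^0,X_0^0,Y^0$, $Z^0\in\mathrm{range}(\sqrt{I-W})$. For $k\ge0$: $X^{k+1}$ is any matrix such that each row $r_i^{k+1}$ of $R^{k+1}=\nabla F(X^{k+1})+Y^k+\frac1\eta(X^{k+1}-X_0^k)$ satisfies $\|r_i^{k+1}\|_2^2\le\epsilon_{k+1}/N$; $X_0^{k+1}=\frac12(WX_0^k+X^{k+1}+\eta(Y^k-\sqrt{I-W}Z^k))$, $Y^{k+1}=Y^k+\frac1\eta(X^{k+1}-X_0^{k+1})$, $Z^{k+1}=Z^k+\frac1\eta\sqrt{I-W}X_0^{k+1}$. *)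

theory Defs
  imports "HOL-Analysis.Analysis"
begin

text \<open>Matrices in R^(N x p) are rendered as real^'p^'n (rows indexed by 'n, N = CARD('n)).
  The inner product and norm on this type are the Frobenius ones.\<close>

definition ones :: "real^'n" where "ones = vec 1"

definition psd_sqrt :: "real^'n^'n \<Rightarrow> real^'n^'n" where
  "psd_sqrt M = (THE S. transpose S = S \<and> (\<forall>x. 0 \<le> x \<bullet> (S *v x)) \<and> S ** S = M)"

definition mixing_matrix :: "('n::finite \<Rightarrow> 'n \<Rightarrow> bool) \<Rightarrow> real^'n^'n \<Rightarrow> bool" where
  "mixing_matrix E W \<longleftrightarrow>
     (\<forall>i j. E i j \<longleftrightarrow> E j i) \<and>
     (\<forall>i j. i \<noteq> j \<longrightarrow> (E i j \<longrightarrow> W $ i $ j > 0) \<and> (\<not> E i j \<longrightarrow> W $ i $ j = 0)) \<and>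
     transpose W = W \<and>
     {x. (mat 1 - W) *v x = 0} = span {ones} \<and>
     (\<forall>c v. v \<noteq> 0 \<and> W *v v = c *\<^sub>R v \<longrightarrow> -1 < c \<and> c \<le> 1)"

definition Fobj :: "('n::finite \<Rightarrow> real^'p \<Rightarrow> real) \<Rightarrow> real^'p^'n \<Rightarrow> real" where
  "Fobj f X = (\<Sum>i\<in>UNIV. f i (X $ i)) / real CARD('n)"

definition gradF :: "('n::finite \<Rightarrow> real^'p \<Rightarrow> real^'p) \<Rightarrow> real^'p^'n \<Rightarrow> real^'p^'n" where
  "gradF g X = (\<chi> i. (1 / real CARD('n)) *\<^sub>R g i (X $ i))"

definition augL :: "('n::finite \<Rightarrow> real^'p \<Rightarrow> real) \<Rightarrow> real^'n^'n \<Rightarrow> real \<Rightarrow>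
    real^'p^'n \<Rightarrow> real^'p^'n \<Rightarrow> real^'p^'n \<Rightarrow> real^'p^'n \<Rightarrow> real" where
  "augL f W \<eta> X X0 Y Z =
     Fobj f X + Y \<bullet> (X - X0) + (1 / (2 * \<eta>)) * (norm (X - X0))\<^sup>2
     + Z \<bullet> (psd_sqrt (mat 1 - W) ** X0) + (1 / (2 * \<eta>)) * (norm (psd_sqrt (mat 1 - W) ** X0))\<^sup>2"

definition ADAPD :: "('n::finite \<Rightarrow> real^'p \<Rightarrow> real^'p) \<Rightarrow> real^'n^'n \<Rightarrow> real \<Rightarrow> (nat \<Rightarrow> real) \<Rightarrow>
    (nat \<Rightarrow> real^'p^'n) \<Rightarrow> (nat \<Rightarrow> real^'p^'n) \<Rightarrow> (nat \<Rightarrow> real^'p^'n) \<Rightarrow> (nat \<Rightarrow> real^'p^'n) \<Rightarrow> bool" where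
  "ADAPD g W \<eta> eps Xs X0s Ys Zs \<longleftrightarrow>
     (\<exists>M. Zs 0 = psd_sqrt (mat 1 - W) ** M) \<and>
     (\<forall>k. \<forall>i. (norm ((gradF g (Xs (Suc k)) + Ys k + (1 / \<eta>) *\<^sub>R (Xs (Suc k) - X0s k)) $ i))\<^sup>2
              \<le> eps (Suc k) / real CARD('n)) \<and>
     (\<forall>k. X0s (Suc k) = (1/2) *\<^sub>R (W ** X0s k + Xs (Suc k)
              + \<eta> *\<^sub>R (Ys k - psd_sqrt (mat 1 - W) ** Zs k))) \<and>
     (\<forall>k. Ys (Suc k) = Ys k + (1 / \<eta>) *\<^sub>R (Xs (Suc k) - X0s (Suc k))) \<and>
     (\<forall>k. Zs (Suc k) = Zs k + (1 / \<eta>) *\<^sub>R (psd_sqrt (mat 1 - W) ** X0s (Suc k)))"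

end

theory Submission
  imports Defs
begin

lemma sym_inner:
  fixes A :: "real^'n^'n"
  assumes "transpose A = A"
  shows "(A *v x) \<bullet> y = x \<bullet> (A *v y)"
proof -
  have "x \<bullet> (A *v y) = (x v* A) \<bullet> y" by (simp add: dot_lmul_matrix)
  also have "x v* A = transpose A *v x" by simp
  finally show ?thesis using assms by simp
qed

lemma quad_zero:
  fixes p q :: real
  assumes "\<And>t. 2*t*p + t^2*q \<le> 0"
  shows "p = 0"
proof -
  define t where "t = p / (1 + \<bar>q\<bar>)"
  have pos: "1 + \<bar>q\<bar> > 0" by simp
  have "2*t*p + t^2*q \<le> 0" by (rule assms)
  hence "(2*t*p + t^2*q) * (1 + \<bar>q\<bar>)^2 \<le> 0" by (simp add: mult_nonpos_nonneg)
  moreover have "(2*t*p + t^2*q) * (1 + \<bar>q\<bar>)^2 = p^2 * (2*(1+\<bar>q\<bar>) + q)"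
  proof -
    have gen: "\<And>a. a > 0 \<Longrightarrow> (2*(p/a)*p + (p/a)^2*q) * a^2 = p^2 * (2*a + q)"
      by (simp add: field_simps power2_eq_square)
    show ?thesis unfolding t_def by (rule gen[OF pos])
  qed
  ultimately have "p^2 * (2*(1+\<bar>q\<bar>) + q) \<le> 0" by simp
  moreover have "2*(1+\<bar>q\<bar>) + q > 0" by (cases "q \<ge> 0") auto
  ultimately have "p^2 \<le> 0" by (simp add: mult_le_0_iff)
  thus ?thesis by simp
qed

lemma psd_zero:
  fixes M :: "real^'n^'n"
  assumes sym: "transpose M = M" and psd: "\<And>x. 0 \<le> x \<bullet> (M *v x)" and z: "x \<bullet> (M *v x) = 0"
  shows "M *v x = 0"
proof -
  have "y \<bullet> (M *v x) = 0" for y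
  proof -
    have "2*t*(-(y \<bullet> (M *v x))) + t^2*(-(y \<bullet> (M *v y))) \<le> 0" for t
    proof -
      have "0 \<le> (x + t *\<^sub>R y) \<bullet> (M *v (x + t *\<^sub>R y))" by (rule psd)
      also have "\<dots> = x \<bullet> (M *v x) + t * (y \<bullet> (M *v x)) + t * (x \<bullet> (M *v y)) + t^2 * (y \<bullet> (M *v y))"
        by (simp add: matrix_vector_right_distrib matrix_vector_mult_scaleR inner_add_left inner_add_right power2_eq_square algebra_simps)
      also have "x \<bullet> (M *v y) = y \<bullet> (M *v x)" using sym_inner[OF sym, of x y] by (simp add: inner_commute)
      finally show ?thesis using z by (simp add: algebra_simps)
    qed
    from quad_zero[OF this] show ?thesis by simp
  qed
  from this[of "M *v x"] show ?thesis by simp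
qed

definition ONB :: "(real^'n) set \<Rightarrow> bool" where
  "ONB B \<longleftrightarrow> finite B \<and> pairwise orthogonal B \<and> (\<forall>b\<in>B. norm b = 1) \<and> span B = UNIV"

lemma ONB_coef:
  assumes "ONB B" "b \<in> B"
  shows "b \<bullet> (\<Sum>b'\<in>B. c b' *\<^sub>R b') = c b"
proof -
  have fin: "finite B" using assms unfolding ONB_def by auto
  have "b \<bullet> (\<Sum>b'\<in>B. c b' *\<^sub>R b') = (\<Sum>b'\<in>B. c b' * (b \<bullet> b'))"
    by (simp add: inner_sum_right)
  also have "\<dots> = (\<Sum>b'\<in>B. if b' = b then c b else 0)"
  proof (rule sum.cong)
    fix b' assume "b' \<in> B"
    show "c b' * (b \<bullet> b') = (if b' = b then c b else 0)"
    proof (cases "b' = b")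
      case True
      then have "b \<bullet> b = 1" using assms unfolding ONB_def by (metis norm_eq_1)
      then show ?thesis using True by simp
    next
      case False
      then have "b \<bullet> b' = 0" using assms \<open>b' \<in> B\<close> unfolding ONB_def pairwise_def orthogonal_def by auto
      then show ?thesis using False by simp
    qed
  qed simp
  also have "\<dots> = c b" using fin assms(2) by (simp add: sum.delta')
  finally show ?thesis .
qed

lemma ONB_expand:
  assumes "ONB B"
  shows "y = (\<Sum>b\<in>B. (b \<bullet> y) *\<^sub>R b)"
proof -
  have fin: "finite B" and sp: "span B = UNIV" using assms unfolding ONB_def by auto
  obtain u where u: "y = (\<Sum>v\<in>B. u v *\<^sub>R v)" using span_finite[OF fin] sp by blast
  have "\<And>b. b \<in> B \<Longrightarrow> b \<bullet> y = u b" using ONB_coef[OF assms] u by simp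
  then show ?thesis using u by (metis (no_types, lifting) sum.cong)
qed

lemma ONB_inner:
  assumes "ONB B"
  shows "y \<bullet> z = (\<Sum>b\<in>B. (b \<bullet> y) * (b \<bullet> z))"
proof -
  have "y \<bullet> z = (\<Sum>b\<in>B. (b \<bullet> y) *\<^sub>R b) \<bullet> z" using ONB_expand[OF assms, of y] by simp
  also have "\<dots> = (\<Sum>b\<in>B. (b \<bullet> y) * (b \<bullet> z))" by (simp add: inner_sum_left)
  finally show ?thesis .
qed

lemma spectral_sub:
  fixes A :: "real^'n^'n"
  assumes sym: "transpose A = A"
  shows "subspace V \<Longrightarrow> (\<forall>x\<in>V. A *v x \<in> V) \<Longrightarrow> \<exists>B. B \<subseteq> V \<and> finite B \<and> pairwise orthogonal B \<and>
      (\<forall>b\<in>B. norm b = 1 \<and> (\<exists>c. A *v b = c *\<^sub>R b)) \<and> span B = V"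
proof (induction "dim V" arbitrary: V rule: less_induct)
  case less
  show ?case
  proof (cases "V = {0}")
    case True
    then show ?thesis by (intro exI[of _ "{}"]) auto
  next
    case False
    have "0 \<in> V" by (rule subspace_0[OF less.prems(1)])
    then obtain v where v: "v \<in> V" "v \<noteq> 0" using False by blast
    define K where "K = V \<inter> sphere 0 1"
    have "compact K" unfolding K_def
      by (intro closed_Int_compact closed_subspace less.prems compact_sphere)
    moreover have "(1 / norm v) *\<^sub>R v \<in> K" using v less.prems unfolding K_def
      by (auto simp: subspace_scale)
    hence "K \<noteq> {}" by auto
    moreover have "continuous_on K (\<lambda>x. x \<bullet> (A *v x))"
      by (intro continuous_intros)
    ultimately have "\<exists>u\<in>K. \<forall>y\<in>K. y \<bullet> (A *v y) \<le> u \<bullet> (A *v u)"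
      by (rule continuous_attains_sup)
    then obtain u where uK: "u \<in> K" and umax: "\<And>y. y \<in> K \<Longrightarrow> y \<bullet> (A *v y) \<le> u \<bullet> (A *v u)"
      by blast
    define l where "l = u \<bullet> (A *v u)"
    have uV: "u \<in> V" and un: "norm u = 1" using uK unfolding K_def by auto
    have uu: "u \<bullet> u = 1" using un by (simp add: norm_eq_1)
    have bound: "x \<bullet> (A *v x) \<le> l * (x \<bullet> x)" if "x \<in> V" for x
    proof (cases "x = 0")
      case True then show ?thesis by simp
    next
      case False
      define x' where "x' = (1 / norm x) *\<^sub>R x"
      have "x' \<in> K" using False that less.prems unfolding K_def x'_def by (auto simp: subspace_scale)
      hence "x' \<bullet> (A *v x') \<le> l" using umax l_def by auto
      moreover have "x' \<bullet> (A *v x') = (x \<bullet> (A *v x)) / (norm x)^2"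
        unfolding x'_def by (simp add: matrix_vector_mult_scaleR power2_eq_square)
      ultimately have "(x \<bullet> (A *v x)) / (norm x)^2 \<le> l" by simp
      moreover have "(norm x)^2 > 0" using False by simp
      ultimately have "x \<bullet> (A *v x) \<le> l * (norm x)^2" by (simp add: divide_le_eq)
      then show ?thesis by (simp add: power2_norm_eq_inner)
    qed
    have orth: "y \<bullet> (A *v u - l *\<^sub>R u) = 0" if yV: "y \<in> V" for y
    proof -
      have "2*t*(y \<bullet> (A *v u) - l * (y \<bullet> u)) + t^2*(y \<bullet> (A *v y) - l * (y \<bullet> y)) \<le> 0" for t
      proof -
        have "u + t *\<^sub>R y \<in> V" using uV yV less.prems by (simp add: subspace_add subspace_scale)
        from bound[OF this] have "(u + t *\<^sub>R y) \<bullet> (A *v (u + t *\<^sub>R y)) \<le> l * ((u + t *\<^sub>R y) \<bullet> (u + t *\<^sub>R y))" .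
        moreover have "(u + t *\<^sub>R y) \<bullet> (A *v (u + t *\<^sub>R y)) = u \<bullet> (A *v u) + t * (y \<bullet> (A *v u)) + t * (u \<bullet> (A *v y)) + t^2 * (y \<bullet> (A *v y))"
          by (simp add: matrix_vector_right_distrib matrix_vector_mult_scaleR inner_add_left inner_add_right power2_eq_square algebra_simps)
        moreover have "u \<bullet> (A *v y) = y \<bullet> (A *v u)" using sym_inner[OF sym, of u y] by (simp add: inner_commute)
        moreover have "(u + t *\<^sub>R y) \<bullet> (u + t *\<^sub>R y) = u \<bullet> u + 2 * t * (y \<bullet> u) + t^2 * (y \<bullet> y)"
          by (simp add: inner_add_left inner_add_right power2_eq_square algebra_simps inner_commute)
        ultimately have "l + 2 * t * (y \<bullet> (A *v u)) + t^2 * (y \<bullet> (A *v y)) \<le> l * (1 + 2 * t * (y \<bullet> u) + t^2 * (y \<bullet> y))"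
          unfolding l_def using uu by (simp add: algebra_simps power2_eq_square inner_commute[of y u])
        moreover have "l * (1 + 2 * t * (y \<bullet> u) + t^2 * (y \<bullet> y)) = l + 2 * t * (l * (y \<bullet> u)) + t^2 * (l * (y \<bullet> y))"
          by (simp add: algebra_simps)
        moreover have "2*t*(y \<bullet> (A *v u) - l * (y \<bullet> u)) + t^2*(y \<bullet> (A *v y) - l * (y \<bullet> y)) = 
           2 * t * (y \<bullet> (A *v u)) + t^2 * (y \<bullet> (A *v y)) - (2 * t * (l * (y \<bullet> u)) + t^2 * (l * (y \<bullet> y)))"
          by (simp add: algebra_simps)
        ultimately show ?thesis by linarith
      qed
      from quad_zero[OF this] show ?thesis by (simp add: inner_diff_right algebra_simps)
    qed
    have "A *v u - l *\<^sub>R u \<in> V" using less.prems uV by (simp add: subspace_diff subspace_scale)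
    from orth[OF this] have eig: "A *v u = l *\<^sub>R u" by simp
    define V' where "V' = {x\<in>V. u \<bullet> x = 0}"
    have subV': "subspace V'" using less.prems unfolding V'_def subspace_def
      by (auto simp: inner_add_right)
    have invV': "\<forall>x\<in>V'. A *v x \<in> V'"
    proof
      fix x assume "x \<in> V'"
      hence "x \<in> V" "u \<bullet> x = 0" unfolding V'_def by auto
      moreover have "u \<bullet> (A *v x) = (A *v u) \<bullet> x" using sym_inner[OF sym, of u x] by simp
      ultimately show "A *v x \<in> V'" using less.prems eig unfolding V'_def by auto
    qed
    have "u \<notin> V'" using uu unfolding V'_def by auto
    hence "V' \<subset> V" using uV unfolding V'_def by blast
    moreover have "span V' = V'" "span V = V" using subV' less.prems(1) by (simp_all add: span_eq_iff)
    ultimately have "span V' \<subset> span V" by (simp only:)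
    hence "dim V' < dim V" by (rule dim_psubset)
    from less.hyps[OF this subV' invV'] obtain B' where B':
      "B' \<subseteq> V'" "finite B'" "pairwise orthogonal B'"
      "\<forall>b\<in>B'. norm b = 1 \<and> (\<exists>c. A *v b = c *\<^sub>R b)" "span B' = V'" by blast
    have uB': "u \<notin> B'" using B'(1) uu unfolding V'_def by auto
    show ?thesis
    proof (intro exI[of _ "insert u B'"] conjI)
      show "insert u B' \<subseteq> V" using B'(1) uV unfolding V'_def by auto
      show "finite (insert u B')" using B'(2) by simp
      show "pairwise orthogonal (insert u B')"
        using B'(1,3) unfolding pairwise_insert V'_def orthogonal_def by (auto simp: inner_commute)
      show "\<forall>b\<in>insert u B'. norm b = 1 \<and> (\<exists>c. A *v b = c *\<^sub>R b)" using B'(4) un eig by auto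
      show "span (insert u B') = V"
      proof
        show "span (insert u B') \<subseteq> V"
          using B'(1) uV less.prems unfolding V'_def by (intro span_minimal) auto
        show "V \<subseteq> span (insert u B')"
        proof
          fix x assume xV: "x \<in> V"
          have "x - (u \<bullet> x) *\<^sub>R u \<in> V'" using xV uV uu less.prems unfolding V'_def
            by (auto simp: subspace_diff subspace_scale inner_diff_right)
          hence "x - (u \<bullet> x) *\<^sub>R u \<in> span (insert u B')" using B'(5) span_mono[of B' "insert u B'"] by auto
          moreover have "(u \<bullet> x) *\<^sub>R u \<in> span (insert u B')" by (simp add: span_base span_scale)
          ultimately have "x - (u \<bullet> x) *\<^sub>R u + (u \<bullet> x) *\<^sub>R u \<in> span (insert u B')" by (rule span_add)
          thus "x \<in> span (insert u B')" by simp
        qed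
      qed
    qed
  qed
qed

lemma spectral:
  fixes A :: "real^'n^'n"
  assumes sym: "transpose A = A"
  shows "\<exists>B. ONB B \<and> (\<forall>b\<in>B. A *v b = (b \<bullet> (A *v b)) *\<^sub>R b)"
proof -
  obtain B where B: "finite B" "pairwise orthogonal B"
      "\<forall>b\<in>B. norm b = 1 \<and> (\<exists>c. A *v b = c *\<^sub>R b)" "span B = UNIV"
    using spectral_sub[OF sym, of UNIV] by auto
  have "A *v b = (b \<bullet> (A *v b)) *\<^sub>R b" if bB: "b \<in> B" for b
  proof -
    obtain c where c: "A *v b = c *\<^sub>R b" using B(3) bB by auto
    have "b \<bullet> b = 1" using B(3) bB by (simp add: norm_eq_1)
    then have "b \<bullet> (A *v b) = c" using c by simp
    then show ?thesis using c by simp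
  qed
  then show ?thesis using B unfolding ONB_def by auto
qed

lemma vec_eq_by_inner:
  fixes x y :: "real^'n"
  assumes "\<And>z. x \<bullet> z = y \<bullet> z"
  shows "x = y"
proof -
  have "(x - y) \<bullet> (x - y) = 0" using assms[of "x - y"] by (simp add: inner_diff_left)
  then show ?thesis by simp
qed

lemma sym_from_inner:
  fixes M :: "real^'n^'n"
  assumes "\<And>x y. (M *v x) \<bullet> y = x \<bullet> (M *v y)"
  shows "transpose M = M"
proof -
  have "transpose M *v x = M *v x" for x
  proof (rule vec_eq_by_inner)
    fix z
    have "(transpose M *v x) \<bullet> z = (x v* M) \<bullet> z" by simp
    also have "\<dots> = x \<bullet> (M *v z)" by (rule dot_lmul_matrix)
    also have "\<dots> = (M *v x) \<bullet> z" using assms by simp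
    finally show "(transpose M *v x) \<bullet> z = (M *v x) \<bullet> z" .
  qed
  then show ?thesis by (simp add: matrix_eq)
qed

lemma sqrt_unique:
  fixes S T :: "real^'n^'n"
  assumes sS: "transpose S = S" and pS: "\<And>x. 0 \<le> x \<bullet> (S *v x)"
    and sT: "transpose T = T" and pT: "\<And>x. 0 \<le> x \<bullet> (T *v x)"
    and eq: "S ** S = T ** T"
  shows "S = T"
proof -
  define D where "D = S - T"
  have Dv: "D *v v = S *v v - T *v v" for v unfolding D_def by (simp add: matrix_vector_mult_diff_rdistrib)
  have sD: "transpose D = D" unfolding D_def using sS sT by (simp add: transpose_def vec_eq_iff)
  obtain B where B: "ONB B" "\<forall>b\<in>B. D *v b = (b \<bullet> (D *v b)) *\<^sub>R b" using spectral[OF sD] by blast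
  have Db0: "D *v b = 0" if bB: "b \<in> B" for b
  proof (rule ccontr)
    assume nz: "D *v b \<noteq> 0"
    define mu where "mu = b \<bullet> (D *v b)"
    have eigb: "D *v b = mu *\<^sub>R b" using B(2) bB unfolding mu_def by auto
    have mu0: "mu \<noteq> 0" using nz eigb by auto
    have "S *v (D *v b) + D *v (T *v b) = (S ** S) *v b - (T ** T) *v b"
      by (simp add: Dv matrix_vector_mult_diff_distrib matrix_vector_mul_assoc[symmetric])
    also have "\<dots> = 0" using eq by simp
    finally have "b \<bullet> (S *v (D *v b) + D *v (T *v b)) = 0" by simp
    moreover have "b \<bullet> (D *v (T *v b)) = (D *v b) \<bullet> (T *v b)" using sym_inner[OF sD, of b "T *v b"] by simp
    ultimately have "mu * (b \<bullet> (S *v b)) + mu * (b \<bullet> (T *v b)) = 0"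
      using eigb by (simp add: inner_add_right matrix_vector_mult_scaleR)
    hence "b \<bullet> (S *v b) + b \<bullet> (T *v b) = 0" using mu0 by (simp add: distrib_left[symmetric])
    hence "b \<bullet> (S *v b) = 0" "b \<bullet> (T *v b) = 0" using pS[of b] pT[of b] by linarith+
    hence "S *v b = 0" "T *v b = 0" using psd_zero[OF sS pS] psd_zero[OF sT pT] by auto
    hence "D *v b = 0" by (simp add: Dv)
    with nz show False by simp
  qed
  have "D *v x = 0" for x
  proof (rule vec_eq_by_inner)
    fix y
    have "(D *v x) \<bullet> y = x \<bullet> (D *v y)" by (rule sym_inner[OF sD])
    also have "\<dots> = (\<Sum>b\<in>B. (b \<bullet> x) * (b \<bullet> (D *v y)))" by (rule ONB_inner[OF B(1)])
    also have "\<dots> = 0"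
    proof (rule sum.neutral, rule ballI)
      fix b assume "b \<in> B"
      have "b \<bullet> (D *v y) = (D *v b) \<bullet> y" using sym_inner[OF sD, of b y] by simp
      then show "(b \<bullet> x) * (b \<bullet> (D *v y)) = 0" using Db0[OF \<open>b \<in> B\<close>] by simp
    qed
    finally show "(D *v x) \<bullet> y = 0 \<bullet> y" by simp
  qed
  then have "D = 0" by (simp add: matrix_eq)
  then show ?thesis unfolding D_def by simp
qed

lemma W_facts:
  fixes W :: "real^'n^'n"
  assumes sW: "transpose W = W"
    and eig: "\<forall>c v. v \<noteq> 0 \<and> W *v v = c *\<^sub>R v \<longrightarrow> -1 < c \<and> c \<le> 1"
  shows "transpose (psd_sqrt (mat 1 - W)) = psd_sqrt (mat 1 - W) \<and>
         psd_sqrt (mat 1 - W) ** psd_sqrt (mat 1 - W) = mat 1 - W \<and>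
         (\<forall>x. norm (W *v x) \<le> norm x) \<and> (\<forall>x. -(x \<bullet> x) \<le> x \<bullet> (W *v x))"
proof -
  obtain B where B: "ONB B" and eB: "\<forall>b\<in>B. W *v b = (b \<bullet> (W *v b)) *\<^sub>R b" using spectral[OF sW] by blast
  define lam where "lam b = b \<bullet> (W *v b)" for b
  have lamb: "-1 < lam b \<and> lam b \<le> 1" if "b \<in> B" for b
  proof -
    have "norm b = 1" using B that unfolding ONB_def by auto
    hence "b \<noteq> 0" by auto
    then show ?thesis using eig eB that unfolding lam_def by blast
  qed
  have Wb: "b \<bullet> (W *v x) = lam b * (b \<bullet> x)" if "b \<in> B" for b x
  proof -
    have "b \<bullet> (W *v x) = (W *v b) \<bullet> x" using sym_inner[OF sW, of b x] by simp
    also have "\<dots> = lam b * (b \<bullet> x)" using eB that unfolding lam_def by (metis inner_scaleR_left)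
    finally show ?thesis .
  qed
  have normW: "norm (W *v x) \<le> norm x" for x
  proof -
    have "(W *v x) \<bullet> (W *v x) = (\<Sum>b\<in>B. (lam b * (b \<bullet> x)) * (lam b * (b \<bullet> x)))"
      using ONB_inner[OF B, of "W *v x" "W *v x"] Wb by (simp cong: sum.cong)
    also have "\<dots> \<le> (\<Sum>b\<in>B. (b \<bullet> x) * (b \<bullet> x))"
    proof (rule sum_mono)
      fix b assume bB: "b \<in> B"
      have "(lam b)^2 \<le> 1" using lamb[OF bB] abs_square_le_1[of "lam b"] by (auto simp: abs_le_iff)
      then have "(lam b)^2 * (b \<bullet> x)^2 \<le> 1 * (b \<bullet> x)^2" by (intro mult_right_mono) auto
      then show "(lam b * (b \<bullet> x)) * (lam b * (b \<bullet> x)) \<le> (b \<bullet> x) * (b \<bullet> x)"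
        by (simp add: power2_eq_square algebra_simps)
    qed
    also have "\<dots> = x \<bullet> x" using ONB_inner[OF B, of x x] by simp
    finally have "(norm (W *v x))^2 \<le> (norm x)^2" by (simp add: power2_norm_eq_inner)
    then show ?thesis by (simp add: power2_le_iff_abs_le)
  qed
  have quadW: "-(x \<bullet> x) \<le> x \<bullet> (W *v x)" for x
  proof -
    have "x \<bullet> (W *v x) = (\<Sum>b\<in>B. (b \<bullet> x) * (lam b * (b \<bullet> x)))"
      using ONB_inner[OF B, of x "W *v x"] Wb by (simp cong: sum.cong)
    moreover have "(\<Sum>b\<in>B. -((b \<bullet> x) * (b \<bullet> x))) \<le> (\<Sum>b\<in>B. (b \<bullet> x) * (lam b * (b \<bullet> x)))"
    proof (rule sum_mono)
      fix b assume bB: "b \<in> B"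
      have "-1 * (b \<bullet> x)^2 \<le> lam b * (b \<bullet> x)^2" using lamb[OF bB] by (intro mult_right_mono) auto
      then show "-((b \<bullet> x) * (b \<bullet> x)) \<le> (b \<bullet> x) * (lam b * (b \<bullet> x))"
        by (simp add: power2_eq_square algebra_simps)
    qed
    moreover have "(\<Sum>b\<in>B. -((b \<bullet> x) * (b \<bullet> x))) = -(x \<bullet> x)"
      using ONB_inner[OF B, of x x] by (simp add: sum_negf)
    ultimately show ?thesis by simp
  qed
  define sq where "sq b = sqrt (1 - lam b)" for b
  define F where "F x = (\<Sum>b\<in>B. (sq b * (b \<bullet> x)) *\<^sub>R b)" for x
  have linF: "linear F"
  proof (rule linearI)
    fix x y show "F (x + y) = F x + F y" unfolding F_def
      by (simp add: inner_add_right distrib_left scaleR_add_left sum.distrib)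
  next
    fix c :: real and x show "F (c *\<^sub>R x) = c *\<^sub>R F x" unfolding F_def
      by (simp add: scaleR_sum_right algebra_simps)
  qed
  define S0 where "S0 = matrix F"
  have S0v: "S0 *v x = F x" for x unfolding S0_def using matrix_vector_mul(2)[OF linF] by metis
  have bF: "b \<bullet> F x = sq b * (b \<bullet> x)" if "b \<in> B" for b x
    unfolding F_def by (rule ONB_coef[OF B that])
  have symF: "(S0 *v x) \<bullet> y = x \<bullet> (S0 *v y)" for x y
  proof -
    have "(S0 *v x) \<bullet> y = (\<Sum>b\<in>B. (sq b * (b \<bullet> x)) * (b \<bullet> y))"
      using ONB_inner[OF B, of "F x" y] bF S0v by (simp cong: sum.cong)
    also have "\<dots> = (\<Sum>b\<in>B. (b \<bullet> x) * (sq b * (b \<bullet> y)))" by (simp add: algebra_simps)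
    also have "\<dots> = x \<bullet> (S0 *v y)"
      using ONB_inner[OF B, of x "F y"] bF S0v by (simp cong: sum.cong)
    finally show ?thesis .
  qed
  have sS0: "transpose S0 = S0" by (rule sym_from_inner[OF symF])
  have sq2: "sq b * sq b = 1 - lam b" if "b \<in> B" for b
    unfolding sq_def using lamb[OF that] by simp
  have pS0: "0 \<le> x \<bullet> (S0 *v x)" for x
  proof -
    have "x \<bullet> (S0 *v x) = (\<Sum>b\<in>B. (b \<bullet> x) * (sq b * (b \<bullet> x)))"
      using ONB_inner[OF B, of x "F x"] bF S0v by (simp cong: sum.cong)
    also have "\<dots> \<ge> 0"
    proof (intro sum_nonneg)
      fix b assume "b \<in> B"
      have "0 \<le> sq b" unfolding sq_def using lamb[OF \<open>b \<in> B\<close>] by simp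
      moreover have "(b \<bullet> x) * (sq b * (b \<bullet> x)) = sq b * ((b \<bullet> x) * (b \<bullet> x))" by (simp add: ac_simps)
      ultimately show "0 \<le> (b \<bullet> x) * (sq b * (b \<bullet> x))" by (metis mult_nonneg_nonneg zero_le_square)
    qed
    finally show ?thesis .
  qed
  have S0sq: "S0 ** S0 = mat 1 - W"
  proof -
    have "(S0 ** S0) *v x = (mat 1 - W) *v x" for x
    proof (rule vec_eq_by_inner)
      fix z
      have "((S0 ** S0) *v x) \<bullet> z = (\<Sum>b\<in>B. (b \<bullet> ((S0 ** S0) *v x)) * (b \<bullet> z))"
        by (rule ONB_inner[OF B])
      also have "\<dots> = (\<Sum>b\<in>B. (b \<bullet> ((mat 1 - W) *v x)) * (b \<bullet> z))"
      proof (rule sum.cong[OF refl])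
        fix b assume bB: "b \<in> B"
        have "b \<bullet> ((S0 ** S0) *v x) = sq b * (sq b * (b \<bullet> x))"
          by (simp add: matrix_vector_mul_assoc[symmetric] S0v bF[OF bB])
        also have "\<dots> = (1 - lam b) * (b \<bullet> x)" using sq2[OF bB] by (simp add: mult.assoc[symmetric])
        also have "\<dots> = b \<bullet> ((mat 1 - W) *v x)"
          by (simp add: matrix_vector_mult_diff_rdistrib inner_diff_right Wb[OF bB] algebra_simps)
        finally show "(b \<bullet> ((S0 ** S0) *v x)) * (b \<bullet> z) = (b \<bullet> ((mat 1 - W) *v x)) * (b \<bullet> z)" by simp
      qed
      also have "\<dots> = ((mat 1 - W) *v x) \<bullet> z" by (rule ONB_inner[OF B, symmetric])
      finally show "((S0 ** S0) *v x) \<bullet> z = ((mat 1 - W) *v x) \<bullet> z" .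
    qed
    then show ?thesis by (simp add: matrix_eq)
  qed
  have "psd_sqrt (mat 1 - W) = S0"
    unfolding psd_sqrt_def
  proof (rule the_equality)
    show "transpose S0 = S0 \<and> (\<forall>x. 0 \<le> x \<bullet> (S0 *v x)) \<and> S0 ** S0 = mat 1 - W"
      using sS0 pS0 S0sq by blast
  next
    fix T assume T: "transpose T = T \<and> (\<forall>x. 0 \<le> x \<bullet> (T *v x)) \<and> T ** T = mat 1 - W"
    show "T = S0" using sqrt_unique[of T S0] T sS0 pS0 S0sq by auto
  qed
  then show ?thesis using sS0 S0sq normW quadW by simp
qed

lemma col_inner:
  fixes X Y :: "real^'p^'n"
  shows "X \<bullet> Y = (\<Sum>j\<in>UNIV. column j X \<bullet> column j Y)"
  unfolding inner_vec_def column_def by (simp add: sum.swap[of _ "UNIV::'n set"])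

lemma col_mult:
  fixes M :: "real^'n^'n" and X :: "real^'p^'n"
  shows "column j (M ** X) = M *v column j X"
  by (simp add: column_def matrix_matrix_mult_def matrix_vector_mult_def vec_eq_iff)

lemma mat_sym_inner:
  fixes M :: "real^'n^'n" and X Y :: "real^'p^'n"
  assumes "transpose M = M"
  shows "(M ** X) \<bullet> Y = X \<bullet> (M ** Y)"
  by (simp add: col_inner col_mult sym_inner[OF assms])

lemma mat_normW:
  fixes W :: "real^'n^'n" and X :: "real^'p^'n"
  assumes "\<forall>x. norm (W *v x) \<le> norm x"
  shows "norm (W ** X) \<le> norm X"
proof -
  have "(W ** X) \<bullet> (W ** X) \<le> X \<bullet> X"
    unfolding col_inner col_mult
  proof (rule sum_mono)
    fix j
    have "norm (W *v column j X) \<le> norm (column j X)" using assms by blast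
    hence "(norm (W *v column j X))^2 \<le> (norm (column j X))^2" by (simp add: power_mono)
    then show "(W *v column j X) \<bullet> (W *v column j X) \<le> column j X \<bullet> column j X"
      by (simp add: power2_norm_eq_inner)
  qed
  hence "(norm (W ** X))^2 \<le> (norm X)^2" by (simp add: power2_norm_eq_inner)
  then show ?thesis by (simp add: power2_le_iff_abs_le)
qed

lemma mat_quadW:
  fixes W :: "real^'n^'n" and X :: "real^'p^'n"
  assumes "\<forall>x. -(x \<bullet> x) \<le> x \<bullet> (W *v x)"
  shows "-(X \<bullet> X) \<le> X \<bullet> (W ** X)"
proof -
  have "(\<Sum>j\<in>UNIV. -(column j X \<bullet> column j X)) \<le> (\<Sum>j\<in>UNIV. column j X \<bullet> (W *v column j X))"
    using assms by (intro sum_mono) blast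
  then show ?thesis unfolding col_inner col_mult by (simp add: sum_negf)
qed

lemma mm_diff_l:
  fixes A :: "real^'n^'n" and B C :: "real^'p^'n"
  shows "A ** (B - C) = A ** B - A ** C"
  by (simp add: matrix_matrix_mult_def vec_eq_iff sum_subtractf algebra_simps)

lemma mm_diff_r:
  fixes A B :: "real^'n^'n" and C :: "real^'p^'n"
  shows "(A - B) ** C = A ** C - B ** C"
  by (simp add: matrix_matrix_mult_def vec_eq_iff sum_subtractf algebra_simps)

lemma mm_scale_r:
  fixes A :: "real^'n^'n" and B :: "real^'p^'n"
  shows "A ** (k *\<^sub>R B) = k *\<^sub>R (A ** B)"
  by (simp add: matrix_matrix_mult_def vec_eq_iff sum_distrib_left algebra_simps)

lemma mm_blin:
  fixes A :: "real^'n^'n"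
  shows "bounded_linear (\<lambda>B::real^'p^'n. A ** B)"
proof -
  have "linear (\<lambda>B::real^'p^'n. A ** B)"
    by (rule linearI) (simp_all add: matrix_add_ldistrib mm_scale_r)
  then show ?thesis by (simp add: linear_conv_bounded_linear)
qed

theorem lemma8:
  fixes E :: "'n::finite \<Rightarrow> 'n \<Rightarrow> bool"
    and W :: "real^'n^'n"
    and f :: "'n \<Rightarrow> real^'p::finite \<Rightarrow> real"
    and g :: "'n \<Rightarrow> real^'p \<Rightarrow> real^'p"
    and \<eta> :: real and eps :: "nat \<Rightarrow> real"
    and Xs X0s Ys Zs :: "nat \<Rightarrow> real^'p^'n"
  assumes W: "mixing_matrix E W"
    and eta: "\<eta> > 0"
    and grad: "\<And>i x. (f i has_derivative (\<lambda>h. g i x \<bullet> h)) (at x)"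
    and eps_nonneg: "\<And>k. k \<ge> 1 \<Longrightarrow> eps k \<ge> 0"
    and eps_mono: "\<And>k l. 1 \<le> k \<Longrightarrow> k \<le> l \<Longrightarrow> eps l \<le> eps k"
    and alg: "ADAPD g W \<eta> eps Xs X0s Ys Zs"
  shows "(\<forall>X Y Z. \<exists>G. (\<forall>X0. ((\<lambda>V. augL f W \<eta> X V Y Z) has_derivative (\<lambda>H. G X0 \<bullet> H)) (at X0))
                      \<and> (3 / \<eta>)-lipschitz_on UNIV G)
    \<and> (\<forall>k. augL f W \<eta> (Xs (Suc k)) (X0s (Suc k)) (Ys k) (Zs k)
              - augL f W \<eta> (Xs (Suc k)) (X0s k) (Ys k) (Zs k)
            \<le> - (1 / (2 * \<eta>)) * (norm (X0s (Suc k) - X0s k))\<^sup>2)"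
proof -
  define S where "S = psd_sqrt (mat 1 - W)"
  have sW: "transpose W = W" and eigW: "\<forall>c v. v \<noteq> 0 \<and> W *v v = c *\<^sub>R v \<longrightarrow> -1 < c \<and> c \<le> 1"
    using W unfolding mixing_matrix_def by auto
  note WF = W_facts[OF sW eigW, folded S_def]
  have sS: "transpose S = S" and SS: "S ** S = mat 1 - W" using WF by auto
  have nW: "\<And>X::real^'p^'n. norm (W ** X) \<le> norm X" using WF by (intro mat_normW) auto
  have qW: "\<And>X::real^'p^'n. -(X \<bullet> X) \<le> X \<bullet> (W ** X)" using WF by (intro mat_quadW) auto
  have SSX: "S ** (S ** X) = X - W ** X" for X :: "real^'p^'n"
    by (simp add: matrix_mul_assoc SS mm_diff_r)
  have part1: "\<exists>G. (\<forall>X0. ((\<lambda>V. augL f W \<eta> X V Y Z) has_derivative (\<lambda>H. G X0 \<bullet> H)) (at X0))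
                      \<and> (3 / \<eta>)-lipschitz_on UNIV G" for X Y Z
  proof -
    define G where "G X0 = - Y + (1/\<eta>) *\<^sub>R (X0 - X) + S ** Z + (1/\<eta>) *\<^sub>R (S ** (S ** X0))" for X0
    have deriv: "((\<lambda>V. augL f W \<eta> X V Y Z) has_derivative (\<lambda>H. G X0 \<bullet> H)) (at X0)" for X0
    proof -
      have eq: "(\<lambda>V. augL f W \<eta> X V Y Z) = (\<lambda>V. Fobj f X + Y \<bullet> (X - V) + (1 / (2 * \<eta>)) * ((X - V) \<bullet> (X - V))
         + Z \<bullet> (S ** V) + (1 / (2 * \<eta>)) * ((S ** V) \<bullet> (S ** V)))"
        unfolding augL_def S_def by (simp add: power2_norm_eq_inner)
      have d1: "((\<lambda>V. S ** V) has_derivative (\<lambda>H. S ** H)) (at X0)"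
        by (rule bounded_linear.has_derivative[OF mm_blin has_derivative_ident])
      show ?thesis unfolding eq
        apply (rule has_derivative_eq_rhs)
         apply (rule derivative_eq_intros d1 refl)+
        apply (rule ext)
        subgoal for H
          using mat_sym_inner[OF sS, of Z H] mat_sym_inner[OF sS, of "S ** X0" H] eta
          by (simp add: G_def inner_add_left inner_add_right inner_diff_left inner_diff_right inner_commute field_simps)
        done
    qed
    have lip: "(3 / \<eta>)-lipschitz_on UNIV G"
    proof (rule lipschitz_onI)
      show "0 \<le> 3 / \<eta>" using eta by simp
      fix A B :: "real^'p^'n"
      define D where "D = A - B"
      have "G A - G B = (1/\<eta>) *\<^sub>R (D + S ** (S ** D))"
        unfolding G_def D_def by (simp add: mm_diff_l algebra_simps)
      also have "\<dots> = (1/\<eta>) *\<^sub>R (D + D - W ** D)" by (simp add: SSX algebra_simps)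
      finally have "norm (G A - G B) = (1/\<eta>) * norm (D + D - W ** D)" using eta by simp
      also have "\<dots> \<le> (1/\<eta>) * (2 * norm D + norm D)"
      proof -
        have "norm (D + D - W ** D) \<le> norm (D + D) + norm (W ** D)" by (rule norm_triangle_ineq4)
        also have "\<dots> \<le> 2 * norm D + norm D" using nW[of D] norm_triangle_ineq[of D D] by simp
        finally show ?thesis using eta by (simp add: divide_right_mono)
      qed
      also have "\<dots> = (3/\<eta>) * norm D" by simp
      finally show "dist (G A) (G B) \<le> (3/\<eta>) * dist A B" unfolding D_def by (simp add: dist_norm)
    qed
    show ?thesis using deriv lip by blast
  qed
  have part2: "augL f W \<eta> (Xs (Suc k)) (X0s (Suc k)) (Ys k) (Zs k)
              - augL f W \<eta> (Xs (Suc k)) (X0s k) (Ys k) (Zs k)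
            \<le> - (1 / (2 * \<eta>)) * (norm (X0s (Suc k) - X0s k))\<^sup>2" for k
  proof -
    define X where "X = Xs (Suc k)"
    define P where "P = X0s k"
    define Q where "Q = X0s (Suc k)"
    define Y where "Y = Ys k"
    define Z where "Z = Zs k"
    define D where "D = Q - P"
    have upd: "Q = (1/2) *\<^sub>R (W ** P + X + \<eta> *\<^sub>R (Y - S ** Z))"
      using alg unfolding ADAPD_def Q_def P_def X_def Y_def Z_def S_def by blast
    have PQ: "P = Q - D" unfolding D_def by simp
    have T1: "Y \<bullet> (X - Q) - Y \<bullet> (X - P) = -(Y \<bullet> D)"
      unfolding PQ by (simp add: inner_diff_right)
    have T2: "(norm (X - Q))^2 - (norm (X - P))^2 = -2 * ((X - Q) \<bullet> D) - D \<bullet> D"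
    proof -
      have e: "X - P = (X - Q) + D" unfolding PQ by simp
      have "(norm (X - P))^2 = (X - Q) \<bullet> (X - Q) + 2 * ((X - Q) \<bullet> D) + D \<bullet> D"
        unfolding e by (simp add: power2_norm_eq_inner inner_add_left inner_add_right inner_commute)
      then show ?thesis by (simp add: power2_norm_eq_inner)
    qed
    have T3: "Z \<bullet> (S ** Q) - Z \<bullet> (S ** P) = (S ** Z) \<bullet> D"
      using mat_sym_inner[OF sS, of Z D] unfolding PQ by (simp add: mm_diff_l inner_diff_right)
    have T4: "(norm (S ** Q))^2 - (norm (S ** P))^2 = 2 * ((Q - W ** Q) \<bullet> D) - (D \<bullet> D - (W ** D) \<bullet> D)"
    proof -
      have SP: "S ** P = S ** Q - S ** D" unfolding PQ by (simp add: mm_diff_l)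
      have "(norm (S ** Q))^2 - (norm (S ** P))^2 = 2 * ((S ** Q) \<bullet> (S ** D)) - (S ** D) \<bullet> (S ** D)"
        unfolding SP by (simp add: power2_norm_eq_inner inner_diff_left inner_diff_right inner_commute)
      also have "(S ** Q) \<bullet> (S ** D) = (S ** (S ** Q)) \<bullet> D" using mat_sym_inner[OF sS, of "S ** Q" D] by simp
      also have "(S ** D) \<bullet> (S ** D) = (S ** (S ** D)) \<bullet> D" using mat_sym_inner[OF sS, of "S ** D" D] by simp
      finally show ?thesis by (simp add: SSX inner_diff_left)
    qed
    have E: "- \<eta> *\<^sub>R Y - (X - Q) + \<eta> *\<^sub>R (S ** Z) + (Q - W ** Q) = - (W ** D)"
    proof -
      have h2: "(2::real) *\<^sub>R Q = W ** P + X + \<eta> *\<^sub>R (Y - S ** Z)"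
        using upd by simp
      have "- \<eta> *\<^sub>R Y - (X - Q) + \<eta> *\<^sub>R (S ** Z) + (Q - W ** Q) = (2::real) *\<^sub>R Q - X - \<eta> *\<^sub>R Y + \<eta> *\<^sub>R (S ** Z) - W ** Q"
        by (simp only: scaleR_2) (simp add: algebra_simps)
      also have "\<dots> = W ** P - W ** Q" unfolding h2 by (simp add: algebra_simps)
      also have "\<dots> = - (W ** D)" unfolding D_def by (simp add: mm_diff_l)
      finally show ?thesis .
    qed
    have Ein: "- \<eta> * (Y \<bullet> D) - (X - Q) \<bullet> D + \<eta> * ((S ** Z) \<bullet> D) + (Q - W ** Q) \<bullet> D = - ((W ** D) \<bullet> D)"
    proof -
      have "(- \<eta> *\<^sub>R Y - (X - Q) + \<eta> *\<^sub>R (S ** Z) + (Q - W ** Q)) \<bullet> D = (- (W ** D)) \<bullet> D"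
        unfolding E ..
      then show ?thesis unfolding inner_add_left inner_diff_left inner_scaleR_left inner_minus_left by linarith
    qed
    have diff: "augL f W \<eta> X Q Y Z - augL f W \<eta> X P Y Z
        = (Y \<bullet> (X - Q) - Y \<bullet> (X - P)) + (1/(2*\<eta>)) * ((norm (X - Q))^2 - (norm (X - P))^2)
          + (Z \<bullet> (S ** Q) - Z \<bullet> (S ** P)) + (1/(2*\<eta>)) * ((norm (S ** Q))^2 - (norm (S ** P))^2)"
      unfolding augL_def S_def by (simp add: algebra_simps)
    also have "\<dots> = -(1/(2*\<eta>)) * ((W ** D) \<bullet> D) - (1/\<eta>) * (D \<bullet> D)"
    proof -
      define a where "a = Y \<bullet> D"
      define b where "b = (X - Q) \<bullet> D"
      define c where "c = (S ** Z) \<bullet> D"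
      define q where "q = (Q - W ** Q) \<bullet> D"
      define w where "w = (W ** D) \<bullet> D"
      define d where "d = D \<bullet> D"
      have e: "- \<eta> * a - b + \<eta> * c + q = - w" using Ein unfolding a_def b_def c_def q_def w_def .
      have "-a + (1/(2*\<eta>)) * (-2 * b - d) + c + (1/(2*\<eta>)) * (2 * q - (d - w)) = -(1/(2*\<eta>)) * w - (1/\<eta>) * d"
      proof -
        have qq: "q = - w + \<eta> * a + b - \<eta> * c" using e by linarith
        show ?thesis unfolding qq using eta by (simp add: field_simps)
      qed
      then show ?thesis unfolding T1 T2 T3 T4 a_def b_def c_def q_def w_def d_def .
    qed
    also have "\<dots> \<le> -(1/(2*\<eta>)) * (D \<bullet> D)"
    proof -
      have "-(D \<bullet> D) \<le> (W ** D) \<bullet> D" using qW[of D] by (simp add: inner_commute)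
      then have h: "-((W ** D) \<bullet> D) \<le> D \<bullet> D" by linarith
      have "-((W ** D) \<bullet> D) / (2*\<eta>) \<le> D \<bullet> D / (2*\<eta>)" using divide_right_mono[OF h] eta by simp
      then have "-(1/(2*\<eta>)) * ((W ** D) \<bullet> D) \<le> (1/(2*\<eta>)) * (D \<bullet> D)" by simp
      then show ?thesis by linarith
    qed
    finally show ?thesis unfolding X_def P_def Q_def Y_def Z_def D_def by (simp add: power2_norm_eq_inner)
  qed
  show ?thesis using part1 part2 by blast
qed

end
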